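(* Let $X$ be a scalar random variable with distribution $\pi$ and upper bound $\ell\in\mathbb{R}$ such that $\mathbb{P}_\pi[X\le\ell]=1$. Let $\alpha\in(0,1]$, $\epsilon\in[0,1]$, and define \[ L(x,\mu,t)=t\left(\mu+e^{\frac{x}{t}-\mu-\ln(\alpha)-1}\right),\qquad u_b(\mu,t)=L(\ell,\mu,t). \] For $N$ independent samples $x_1,\dots,x_N$ of $X$, let $\zeta^*_N(\mu,t)=\max_{1\le k\le N}L(x_k,\mu,t)$. Then \[ \mathbb{P}^N_{\pi}\left[\mathrm{EVaR}_\alpha(X)\le \inf_{\mu\in\mathbb{R},\ t>0}\zeta^*_N(\mu,t)(1-\epsilon)+u_b(\mu,t)\epsilon\right]\ge 1-(1-\epsilon)^N. \]
   Context: The Entropic-Value-at-Risk at level $\alpha\in(0,1]$ is $\mathrm{EVaR}_\alpha(X)=\inf_{z>0}\frac{1}{z}\ln\left(\frac{\mathbb{E}_\pi[e^{zX}]}{\alpha}\right)$. $\zeta^*_N(\mu,t)$ is the solution of $\min_\zeta\zeta$ subject to $\zeta\ge L(x_i,\mu,t)$ for all $i$. $\mathbb{P}^N_\pi$ is the $N$-fold product measure governing the i.i.d. sample. *)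

theory Defs
  imports "HOL-Probability.Probability"
begin

definition EVaR :: "real \<Rightarrow> real measure \<Rightarrow> ereal" where
  "EVaR \<alpha> M = (INF z\<in>{0<..}. ereal ((1 / z) * ln ((\<integral>x. exp (z * x) \<partial>M) / \<alpha>)))"

definition Lfun :: "real \<Rightarrow> real \<Rightarrow> real \<Rightarrow> real \<Rightarrow> real" where
  "Lfun \<alpha> x \<mu> t = t * (\<mu> + exp (x / t - \<mu> - ln \<alpha> - 1))"

definition zeta_star :: "real \<Rightarrow> nat \<Rightarrow> (nat \<Rightarrow> real) \<Rightarrow> real \<Rightarrow> real \<Rightarrow> real" where
  "zeta_star \<alpha> N xs \<mu> t = Max ((\<lambda>k. Lfun \<alpha> (xs k) \<mu> t) ` {..<N})"

end

theory Submission
  imports Defs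
begin

lemma Lfun_mono: "0 < t \<Longrightarrow> x \<le> y \<Longrightarrow> Lfun a x \<mu> t \<le> Lfun a y \<mu> t"
  unfolding Lfun_def by (intro mult_left_mono add_left_mono) (auto intro: divide_right_mono)

lemma Lfun_alt: "0 < a \<Longrightarrow> Lfun a y \<mu> t = t * \<mu> + t * exp (- \<mu> - 1) / a * exp ((1/t) * y)"
  unfolding Lfun_def by (simp add: exp_diff exp_add exp_minus field_simps)

lemma ln_le_aux: fixes C \<mu> :: real shows "0 < C \<Longrightarrow> ln C \<le> \<mu> + exp (- \<mu> - 1) * C"
proof -
  assume C: "0 < C"
  have "1 + (ln C - \<mu> - 1) \<le> exp (ln C - \<mu> - 1)" by (rule exp_ge_add_one_self)
  also have "\<dots> = exp (- \<mu> - 1) * C" using C by (simp add: exp_diff exp_minus exp_add field_simps)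
  finally show ?thesis by simp
qed

lemma evar_bound:
  fixes \<pi> :: "real measure"
  assumes rd: "real_distribution \<pi>" and AEl: "AE x in \<pi>. x \<le> l"
    and a: "0 < \<alpha>" and ml: "m \<le> l" and e0: "0 \<le> \<epsilon>" and e1: "\<epsilon> \<le> 1"
    and tail: "measure \<pi> {m<..} \<le> \<epsilon>" and t: "0 < t"
  shows "EVaR \<alpha> \<pi> \<le> ereal (Lfun \<alpha> m \<mu> t * (1 - \<epsilon>) + Lfun \<alpha> l \<mu> t * \<epsilon>)"
proof -
  interpret real_distribution \<pi> by (rule rd)
  define f where "f x = exp ((1/t) * x)" for x
  define c where "c = (\<integral>x. f x \<partial>\<pi>)"
  have fm: "f \<in> borel_measurable \<pi>" unfolding f_def by measurable
  have fint: "integrable \<pi> f"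
  proof (rule Bochner_Integration.integrable_bound[of _ "\<lambda>_. f l"])
    show "integrable \<pi> (\<lambda>_. f l)" by simp
    show "f \<in> borel_measurable \<pi>" by (rule fm)
    show "AE x in \<pi>. norm (f x) \<le> norm (f l)"
      using AEl by eventually_elim (use t in \<open>auto simp: f_def intro: divide_right_mono\<close>)
  qed
  have cpos: "0 < c"
  proof -
    have "c \<ge> 0" unfolding c_def f_def by (intro integral_nonneg_AE) auto
    moreover have "c \<noteq> 0"
    proof
      assume "c = 0"
      then have "AE x in \<pi>. f x = 0" using integral_nonneg_eq_0_iff_AE[OF fint] unfolding c_def f_def by auto
      then have "AE x in \<pi>. False" by eventually_elim (simp add: f_def)
      then show False by simp
    qed
    ultimately show ?thesis by simp
  qed
  define A where "A = {m<..}"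
  have Aev: "A \<in> sets \<pi>" unfolding A_def by simp
  have gint: "integrable \<pi> (\<lambda>x. f m + (f l - f m) * indicator A x)"
    using Aev by (intro Bochner_Integration.integrable_add integrable_mult_right integrable_real_indicator) (auto simp: emeasure_eq_measure)
  have "c \<le> (\<integral>x. f m + (f l - f m) * indicator A x \<partial>\<pi>)"
    unfolding c_def
  proof (rule integral_mono_AE[OF fint gint])
    show "AE x in \<pi>. f x \<le> f m + (f l - f m) * indicator A x"
      using AEl by eventually_elim (use t in \<open>auto simp: f_def A_def indicator_def intro: divide_right_mono\<close>)
  qed
  also have "\<dots> = f m + (f l - f m) * measure \<pi> A"
    using Aev by (subst Bochner_Integration.integral_add) (auto intro!: integrable_real_indicator simp: emeasure_eq_measure prob_space prob_space[unfolded space_eq_univ])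
  also have "\<dots> \<le> f m + (f l - f m) * \<epsilon>"
    using tail ml t unfolding A_def by (intro add_left_mono mult_left_mono) (auto simp: f_def intro: divide_right_mono)
  finally have cle: "c \<le> f m * (1 - \<epsilon>) + f l * \<epsilon>" by (simp add: algebra_simps)
  have "EVaR \<alpha> \<pi> \<le> ereal ((1 / (1/t)) * ln (c / \<alpha>))"
    unfolding EVaR_def c_def f_def using t by (intro INF_lower) auto
  also have "(1 / (1/t)) * ln (c / \<alpha>) \<le> t * (\<mu> + exp (- \<mu> - 1) * (c / \<alpha>))"
    using t cpos a ln_le_aux[of "c/\<alpha>" \<mu>] by simp
  also have "\<dots> \<le> t * (\<mu> + exp (- \<mu> - 1) * ((f m * (1 - \<epsilon>) + f l * \<epsilon>) / \<alpha>))"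
    using t a cle by (intro mult_left_mono add_left_mono divide_right_mono) auto
  also have "\<dots> = Lfun \<alpha> m \<mu> t * (1 - \<epsilon>) + Lfun \<alpha> l \<mu> t * \<epsilon>"
    using a unfolding Lfun_alt[OF a] f_def by (simp add: field_simps)
  finally show ?thesis by simp
qed

lemma quantile:
  fixes \<pi> :: "real measure"
  assumes rd: "real_distribution \<pi>" and e0: "0 \<le> \<epsilon>" and e1: "\<epsilon> < 1"
    and l1: "measure \<pi> {..l} = 1"
  obtains q where "measure \<pi> {..<q} \<le> 1 - \<epsilon>" and "measure \<pi> {q<..} \<le> \<epsilon>"
proof -
  interpret real_distribution \<pi> by (rule rd)
  define Q where "Q = {x. 1 - \<epsilon> \<le> cdf \<pi> x}"
  define q where "q = Inf Q"
  have lQ: "l \<in> Q" using l1 e0 unfolding Q_def cdf_def by simp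
  have "eventually (\<lambda>x. cdf \<pi> x < 1 - \<epsilon>) at_bot"
    using cdf_lim_at_bot e1 by (intro order_tendstoD(2)) auto
  then obtain b where b: "\<And>x. x \<le> b \<Longrightarrow> cdf \<pi> x < 1 - \<epsilon>"
    unfolding eventually_at_bot_linorder by blast
  have bdd: "bdd_below Q"
    unfolding bdd_below_def Q_def using b by (metis linorder_not_le mem_Collect_eq order.strict_implies_order)
  have Qne: "Q \<noteq> {}" using lQ by auto
  have 1: "1 - \<epsilon> \<le> cdf \<pi> q"
  proof (rule tendsto_le[of "at_right q"])
    show "(cdf \<pi> \<longlongrightarrow> cdf \<pi> q) (at_right q)"
      using cdf_is_right_cont[of q] by (simp add: continuous_within)
    show "((\<lambda>_. 1 - \<epsilon>) \<longlongrightarrow> 1 - \<epsilon>) (at_right q)" by simp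
    show "eventually (\<lambda>x. 1 - \<epsilon> \<le> cdf \<pi> x) (at_right q)"
      unfolding eventually_at_right_field
    proof (intro exI[of _ "q+1"] conjI allI impI)
      fix y assume "q < y" "y < q + 1"
      then obtain z where "z \<in> Q" "z < y" using cInf_lessD[OF Qne] unfolding q_def by blast
      then show "1 - \<epsilon> \<le> cdf \<pi> y" unfolding Q_def using cdf_nondecreasing[of z y] by auto
    qed simp
  qed simp
  have 2: "measure \<pi> {..<q} \<le> 1 - \<epsilon>"
  proof (rule tendsto_le[of "at_left q"])
    show "(cdf \<pi> \<longlongrightarrow> measure \<pi> {..<q}) (at_left q)" by (rule cdf_at_left)
    show "((\<lambda>_. 1 - \<epsilon>) \<longlongrightarrow> 1 - \<epsilon>) (at_left q)" by simp
    show "eventually (\<lambda>x. cdf \<pi> x \<le> 1 - \<epsilon>) (at_left q)"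
      unfolding eventually_at_left_field
    proof (intro exI[of _ "q-1"] conjI allI impI)
      fix y assume "q - 1 < y" "y < q"
      then have "y \<notin> Q" using cInf_lower[OF _ bdd] unfolding q_def by force
      then show "cdf \<pi> y \<le> 1 - \<epsilon>" unfolding Q_def by auto
    qed simp
  qed simp
  have "measure \<pi> {q<..} = 1 - measure \<pi> {..q}"
    using prob_compl[of "{..q}"] by (simp add: Compl_eq_Diff_UNIV[symmetric] Compl_atMost)
  with 1 have "measure \<pi> {q<..} \<le> \<epsilon>" unfolding cdf_def by simp
  with 2 show ?thesis using that by blast
qed

theorem corollary4:
  fixes \<pi> :: "real measure" and l \<alpha> \<epsilon> :: real and N :: nat
  assumes "prob_space \<pi>"
    and "sets \<pi> = sets borel"
    and "measure \<pi> {x \<in> space \<pi>. x \<le> l} = 1"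
    and "0 < \<alpha>" and "\<alpha> \<le> 1"
    and "0 \<le> \<epsilon>" and "\<epsilon> \<le> 1"
  shows "measure (PiM {..<N} (\<lambda>_. \<pi>))
           {xs \<in> space (PiM {..<N} (\<lambda>_. \<pi>)).
              EVaR \<alpha> \<pi> \<le> (INF p\<in>{p :: real \<times> real. 0 < snd p}.
                 ereal (zeta_star \<alpha> N xs (fst p) (snd p) * (1 - \<epsilon>)
                        + Lfun \<alpha> l (fst p) (snd p) * \<epsilon>))}
         \<ge> 1 - (1 - \<epsilon>) ^ N"
proof (cases "N = 0")
  case True
  then show ?thesis by simp
next
  case False
  then have N0: "N > 0" by simp
  have rd: "real_distribution \<pi>" using assms(1,2) by (simp add: real_distribution_def real_distribution_axioms_def)
  interpret real_distribution \<pi> by (rule rd)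
  define PM where "PM = PiM {..<N} (\<lambda>_. \<pi>)"
  interpret P: product_prob_space "\<lambda>_. \<pi>" "{..<N}" by unfold_locales
  interpret PS: prob_space PM unfolding PM_def by (rule prob_space_PiM) (rule assms(1))
  have l1: "measure \<pi> {..l} = 1" using assms(3) by (simp add: atMost_def)
  have AEl: "AE x in \<pi>. x \<le> l" using AE_prob_1[OF l1] by simp
  define mx where "mx xs = Max (xs ` {..<N})" for xs :: "nat \<Rightarrow> real"
  define g where "g y = (INF p\<in>{p :: real \<times> real. 0 < snd p}.
                 ereal (Lfun \<alpha> y (fst p) (snd p) * (1 - \<epsilon>) + Lfun \<alpha> l (fst p) (snd p) * \<epsilon>))" for y
  define S where "S = {xs \<in> space PM. EVaR \<alpha> \<pi> \<le> g (mx xs)}"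
  have zeta: "zeta_star \<alpha> N xs \<mu> t = Lfun \<alpha> (mx xs) \<mu> t" if "0 < t" for xs \<mu> t
  proof -
    have "mono (\<lambda>x. Lfun \<alpha> x \<mu> t)" using Lfun_mono[OF that] by (auto simp: mono_def)
    then have "Lfun \<alpha> (Max (xs ` {..<N})) \<mu> t = Max ((\<lambda>x. Lfun \<alpha> x \<mu> t) ` xs ` {..<N})"
      by (rule mono_Max_commute) (use N0 in auto)
    then show ?thesis unfolding zeta_star_def mx_def by (simp add: image_image)
  qed
  have Seq: "{xs \<in> space (PiM {..<N} (\<lambda>_. \<pi>)).
              EVaR \<alpha> \<pi> \<le> (INF p\<in>{p :: real \<times> real. 0 < snd p}.
                 ereal (zeta_star \<alpha> N xs (fst p) (snd p) * (1 - \<epsilon>)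
                        + Lfun \<alpha> l (fst p) (snd p) * \<epsilon>))} = S"
    unfolding S_def g_def PM_def
    by (intro Collect_cong conj_cong refl arg_cong2[where f="(\<le>)"] INF_cong) (auto simp: zeta)
  have gmono: "g x \<le> g y" if "x \<le> y" for x y
    unfolding g_def
  proof (rule INF_mono)
    fix p :: "real \<times> real" assume p: "p \<in> {p. 0 < snd p}"
    then show "\<exists>n\<in>{p. 0 < snd p}. ereal (Lfun \<alpha> x (fst n) (snd n) * (1 - \<epsilon>) + Lfun \<alpha> l (fst n) (snd n) * \<epsilon>)
       \<le> ereal (Lfun \<alpha> y (fst p) (snd p) * (1 - \<epsilon>) + Lfun \<alpha> l (fst p) (snd p) * \<epsilon>)"
      using Lfun_mono[of "snd p" x y \<alpha> "fst p"] that assms(7)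
      by (intro bexI[of _ p]) (auto intro: mult_right_mono)
  qed
  define U where "U = {y. EVaR \<alpha> \<pi> \<le> g y}"
  have "mono (indicator U :: real \<Rightarrow> real)"
    unfolding mono_def U_def indicator_def using gmono by (auto intro: order_trans)
  then have "(indicator U :: real \<Rightarrow> real) \<in> borel_measurable borel" by (rule borel_measurable_mono)
  then have Ub: "U \<in> sets borel" by (simp add: borel_measurable_indicator_iff)
  have mxm: "mx \<in> borel_measurable PM"
    unfolding mx_def PM_def by measurable
  have Sm: "S \<in> sets PM"
  proof -
    have "S = mx -` U \<inter> space PM" unfolding S_def U_def by auto
    then show ?thesis using measurable_sets[OF mxm Ub] by simp
  qed
  define G1 where "G1 = {xs \<in> space PM. \<forall>i\<in>{..<N}. xs i \<in> {..l}}"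
  have G1m: "measure PM G1 = 1"
  proof -
    have "emeasure PM G1 = (\<Prod>i\<in>{..<N}. emeasure \<pi> {..l})"
      unfolding G1_def PM_def by (rule P.emeasure_PiM_Collect) auto
    also have "\<dots> = 1" using l1 by (simp add: emeasure_eq_measure)
    finally show ?thesis by (simp add: PS.emeasure_eq_measure)
  qed
  obtain B where Bm: "B \<in> sets PM" and Bmeas: "measure PM B \<le> (1 - \<epsilon>) ^ N"
    and Btail: "\<And>xs. xs \<in> space PM \<Longrightarrow> xs \<notin> B \<Longrightarrow> measure \<pi> {mx xs<..} \<le> \<epsilon>"
  proof (cases "\<epsilon> = 1")
    case True
    show ?thesis
    proof (rule that[of "{}"])
      fix xs show "measure \<pi> {mx xs<..} \<le> \<epsilon>" using True by simp
    qed (use assms(7) in auto)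
  next
    case False
    with assms(7) have e1: "\<epsilon> < 1" by simp
    obtain q where q1: "measure \<pi> {..<q} \<le> 1 - \<epsilon>" and q2: "measure \<pi> {q<..} \<le> \<epsilon>"
      using quantile[OF rd assms(6) e1 l1] by blast
    define B where "B = {xs \<in> space PM. \<forall>i\<in>{..<N}. xs i \<in> {..<q}}"
    show ?thesis
    proof (rule that[of B])
      show "B \<in> sets PM" unfolding B_def PM_def by measurable
      have "emeasure PM B = (\<Prod>i\<in>{..<N}. emeasure \<pi> {..<q})"
        unfolding B_def PM_def by (rule P.emeasure_PiM_Collect) auto
      also have "\<dots> = ennreal (measure \<pi> {..<q} ^ N)"
        by (simp add: emeasure_eq_measure ennreal_power)
      finally have "measure PM B = measure \<pi> {..<q} ^ N"
        by (simp add: PS.emeasure_eq_measure)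
      also have "\<dots> \<le> (1 - \<epsilon>) ^ N" using q1 by (intro power_mono) auto
      finally show "measure PM B \<le> (1 - \<epsilon>) ^ N" .
    next
      fix xs assume xs: "xs \<in> space PM" "xs \<notin> B"
      then obtain i where i: "i < N" "q \<le> xs i" unfolding B_def by (auto simp: not_less)
      then have "q \<le> mx xs" unfolding mx_def by (intro order_trans[OF _ Max_ge]) auto
      then have "measure \<pi> {mx xs<..} \<le> measure \<pi> {q<..}"
        by (intro finite_measure_mono) auto
      with q2 show "measure \<pi> {mx xs<..} \<le> \<epsilon>" by simp
    qed
  qed
  have sub: "G1 - B \<subseteq> S"
  proof
    fix xs assume xs: "xs \<in> G1 - B"
    then have sp: "xs \<in> space PM" unfolding G1_def by auto
    have ml: "mx xs \<le> l" using xs N0 unfolding G1_def mx_def by (subst Max_le_iff) auto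
    have tl: "measure \<pi> {mx xs<..} \<le> \<epsilon>" using Btail[OF sp] xs by auto
    have "EVaR \<alpha> \<pi> \<le> g (mx xs)"
      unfolding g_def
      by (rule INF_greatest) (use evar_bound[OF rd AEl assms(4) ml assms(6) assms(7) tl] in auto)
    then show "xs \<in> S" unfolding S_def using sp by auto
  qed
  have G1s: "G1 \<in> sets PM" unfolding G1_def PM_def by measurable
  have "measure PM G1 \<le> measure PM ((G1 - B) \<union> B)"
    by (intro PS.finite_measure_mono) (use G1s Bm in auto)
  also have "\<dots> = measure PM (G1 - B) + measure PM B"
    by (intro measure_Union) (use G1s Bm in auto)
  also have "measure PM (G1 - B) \<le> measure PM S"
    by (intro PS.finite_measure_mono sub Sm)
  finally have "1 - (1 - \<epsilon>) ^ N \<le> measure PM S" using G1m Bmeas by simp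
  then show ?thesis unfolding Seq[symmetric] PM_def .
qed

end
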